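(* The group \(\mathcal{G}=\langle x,y,t \mid x^7, y^2, (xy)^3, [x,y]^4, t^2, [t^{x^2},yx^{-1}], [t,y], (yt^{x^2})^5, (xyx^2t^x)^5, (xt)^8\rangle\) is perfect.
   Context: Conventions: \(a^g=g^{-1}ag\) and \([a,b]=a^{-1}b^{-1}ab\). A group is perfect if it equals its commutator subgroup. *)

theory Defs
  imports "HOL-Algebra.Algebra"
begin

text \<open>Group given by a presentation on generators x, y, t.
  Words are lists of letters (g, b); b = False means g, b = True means g inverse.\<close>

datatype gen = GX | GY | GT

type_synonym word = "(gen \<times> bool) list"

definition ginv :: "word \<Rightarrow> word" where
  "ginv w = rev (map (\<lambda>(g, b). (g, \<not> b)) w)"

definition gpow :: "word \<Rightarrow> nat \<Rightarrow> word" where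
  "gpow w n = concat (replicate n w)"

text \<open>Conventions: a^g = g^-1 a g and [a,b] = a^-1 b^-1 a b.\<close>
definition gconj :: "word \<Rightarrow> word \<Rightarrow> word" where
  "gconj a g = ginv g @ a @ g"

definition gcomm :: "word \<Rightarrow> word \<Rightarrow> word" where
  "gcomm a b = ginv a @ ginv b @ a @ b"

definition wx :: word where "wx = [(GX, False)]"
definition wy :: word where "wy = [(GY, False)]"
definition wt :: word where "wt = [(GT, False)]"

definition relators :: "word set" where
  "relators = {
     gpow wx 7,
     gpow wy 2,
     gpow (wx @ wy) 3,
     gpow (gcomm wx wy) 4,
     gpow wt 2,
     gcomm (gconj wt (gpow wx 2)) (wy @ ginv wx),
     gcomm wt wy,
     gpow (wy @ gconj wt (gpow wx 2)) 5,
     gpow (wx @ wy @ gpow wx 2 @ gconj wt wx) 5,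
     gpow (wx @ wt) 8 }"

inductive geqv :: "word \<Rightarrow> word \<Rightarrow> bool" where
  geqv_refl: "geqv w w"
| geqv_sym: "geqv u v \<Longrightarrow> geqv v u"
| geqv_trans: "geqv u v \<Longrightarrow> geqv v w \<Longrightarrow> geqv u w"
| geqv_cancel: "geqv (u @ [(g, b), (g, \<not> b)] @ v) (u @ v)"
| geqv_rel: "r \<in> relators \<Longrightarrow> geqv (u @ r @ v) (u @ v)"

definition presG :: "word set monoid" where
  "presG = \<lparr> carrier = {{v. geqv w v} | w. True},
             monoid.mult = (\<lambda>A B. {w. \<exists>a\<in>A. \<exists>b\<in>B. geqv (a @ b) w}),
             one = {v. geqv [] v} \<rparr>"

end

theory Submission
  imports Defs
begin

lemma (in comm_group) abel_kill:
  assumes xa: "xa \<in> carrier G" and ya: "ya \<in> carrier G" and ta: "ta \<in> carrier G"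
    and r1: "xa [^] (7::nat) = \<one>" and r2: "ya [^] (2::nat) = \<one>"
    and r3: "(xa \<otimes> ya) [^] (3::nat) = \<one>" and r5: "ta [^] (2::nat) = \<one>"
    and r8: "(ya \<otimes> (inv (xa [^] (2::nat)) \<otimes> (ta \<otimes> xa [^] (2::nat)))) [^] (5::nat) = \<one>"
  shows "xa = \<one> \<and> ya = \<one> \<and> ta = \<one>"
proof -
  have "(xa \<otimes> ya) [^] (3::nat) = xa [^] (3::nat) \<otimes> ya [^] (3::nat)"
    using xa ya by (simp add: pow_mult_distrib m_comm)
  moreover have "ya [^] (3::nat) = ya"
    using r2 ya nat_pow_mult[of ya 2 1] by simp
  ultimately have a: "xa [^] (3::nat) \<otimes> ya = \<one>" using r3 by simp
  hence Yi: "ya = inv (xa [^] (3::nat))" using xa ya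
    by (metis inv_equality m_comm nat_pow_closed)
  have "xa [^] (6::nat) = \<one>"
  proof -
    have "ya [^] (2::nat) = inv (xa [^] (3::nat)) \<otimes> inv (xa [^] (3::nat))"
      using Yi ya by (simp add: numeral_2_eq_2)
    also have "\<dots> = inv (xa [^] (3::nat) \<otimes> xa [^] (3::nat))"
      using xa by (simp add: inv_mult)
    also have "xa [^] (3::nat) \<otimes> xa [^] (3::nat) = xa [^] (6::nat)"
      using xa nat_pow_mult[of xa 3 3] by simp
    finally have "inv (xa [^] (6::nat)) = \<one>" using r2 by simp
    thus ?thesis using xa by (metis inv_inv inv_one nat_pow_closed)
  qed
  hence X1: "xa = \<one>" using xa r1 nat_pow_mult[of xa 6 1] by simp
  hence Y1: "ya = \<one>" using Yi by simp
  have "ta [^] (5::nat) = \<one>" using r8 X1 Y1 ta by simp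
  moreover have "ta [^] (5::nat) = (ta [^] (2::nat)) \<otimes> (ta [^] (2::nat)) \<otimes> ta"
    using ta nat_pow_mult[of ta 2 2] nat_pow_mult[of ta 4 1] by simp
  ultimately have "ta = \<one>" using r5 ta by simp
  thus ?thesis using X1 Y1 by simp
qed

lemma geqv_ctx: "geqv u v \<Longrightarrow> geqv (p @ u @ q) (p @ v @ q)"
proof (induction rule: geqv.induct)
  case (geqv_refl w) then show ?case by (rule geqv.geqv_refl)
next
  case (geqv_sym u v) then show ?case by (metis geqv.geqv_sym)
next
  case (geqv_trans u v w) then show ?case by (metis geqv.geqv_trans)
next
  case (geqv_cancel u g b v)
  then show ?case using geqv.geqv_cancel[of "p @ u" g b "v @ q"] by simp
next
  case (geqv_rel r u v)
  then show ?case using geqv.geqv_rel[of r "p @ u" "v @ q"] by simp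
qed

lemma geqv_app: "geqv a a' \<Longrightarrow> geqv b b' \<Longrightarrow> geqv (a @ b) (a' @ b')"
proof -
  assume "geqv a a'" "geqv b b'"
  then have "geqv ([] @ a @ b) ([] @ a' @ b)" "geqv (a' @ b @ []) (a' @ b' @ [])"
    using geqv_ctx by blast+
  then show ?thesis by (auto intro: geqv.geqv_trans)
qed

definition cls :: "word \<Rightarrow> word set" where "cls w = {v. geqv w v}"

lemma cls_eq: "cls u = cls v \<longleftrightarrow> geqv u v"
proof
  assume "cls u = cls v"
  then have "v \<in> cls u" by (simp add: cls_def geqv_refl)
  then show "geqv u v" by (simp add: cls_def)
next
  assume "geqv u v"
  then show "cls u = cls v" unfolding cls_def
    by (auto intro: geqv.geqv_trans geqv.geqv_sym)
qed

lemma presG_carrier: "carrier presG = range cls"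
  by (auto simp: presG_def cls_def)

lemma presG_one: "\<one>\<^bsub>presG\<^esub> = cls []"
  by (simp add: presG_def cls_def)

lemma presG_mult: "cls a \<otimes>\<^bsub>presG\<^esub> cls b = cls (a @ b)"
proof -
  have "cls a \<otimes>\<^bsub>presG\<^esub> cls b = {w. \<exists>a'\<in>cls a. \<exists>b'\<in>cls b. geqv (a' @ b') w}"
    by (simp add: presG_def)
  also have "\<dots> = cls (a @ b)"
  proof
    show "{w. \<exists>a'\<in>cls a. \<exists>b'\<in>cls b. geqv (a' @ b') w} \<subseteq> cls (a @ b)"
      unfolding cls_def by (auto intro: geqv.geqv_trans geqv_app)
    show "cls (a @ b) \<subseteq> {w. \<exists>a'\<in>cls a. \<exists>b'\<in>cls b. geqv (a' @ b') w}"
      unfolding cls_def by (auto intro: geqv_refl)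
  qed
  finally show ?thesis .
qed

lemma ginv_cons: "ginv ((g, b) # w) = ginv w @ [(g, \<not> b)]"
  by (simp add: ginv_def)

lemma ginv_cancel: "geqv (ginv w @ w) []"
proof (induction w)
  case Nil then show ?case by (simp add: ginv_def geqv_refl)
next
  case (Cons a w)
  obtain g b where a: "a = (g, b)" by (cases a)
  have "geqv (ginv w @ [(g, \<not> b), (g, \<not> \<not> b)] @ w) (ginv w @ w)"
    by (rule geqv_cancel)
  then have "geqv (ginv (a # w) @ a # w) (ginv w @ w)"
    by (simp add: a ginv_cons)
  then show ?case using Cons by (rule geqv_trans)
qed

lemma group_presG: "group presG"
proof (rule groupI)
  fix x y assume "x \<in> carrier presG" "y \<in> carrier presG"
  then show "x \<otimes>\<^bsub>presG\<^esub> y \<in> carrier presG"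
    by (auto simp: presG_carrier presG_mult)
next
  show "\<one>\<^bsub>presG\<^esub> \<in> carrier presG" by (simp add: presG_carrier presG_one)
next
  fix x y z assume "x \<in> carrier presG" "y \<in> carrier presG" "z \<in> carrier presG"
  then show "x \<otimes>\<^bsub>presG\<^esub> y \<otimes>\<^bsub>presG\<^esub> z = x \<otimes>\<^bsub>presG\<^esub> (y \<otimes>\<^bsub>presG\<^esub> z)"
    by (auto simp: presG_carrier presG_mult)
next
  fix x assume "x \<in> carrier presG"
  then show "\<one>\<^bsub>presG\<^esub> \<otimes>\<^bsub>presG\<^esub> x = x"
    by (auto simp: presG_carrier presG_mult presG_one)
next
  fix x assume "x \<in> carrier presG"
  then obtain w where w: "x = cls w" by (auto simp: presG_carrier)
  have "cls (ginv w) \<otimes>\<^bsub>presG\<^esub> x = \<one>\<^bsub>presG\<^esub>"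
    using ginv_cancel[of w] by (simp add: w presG_mult presG_one cls_eq)
  then show "\<exists>y\<in>carrier presG. y \<otimes>\<^bsub>presG\<^esub> x = \<one>\<^bsub>presG\<^esub>"
    by (auto simp: presG_carrier)
qed


lemma cls_app: "cls (a @ b) = cls a \<otimes>\<^bsub>presG\<^esub> cls b"
  by (simp add: presG_mult)

lemma cls_carrier[simp]: "cls w \<in> carrier presG"
  by (simp add: presG_carrier)

lemma cls_ginv: "cls (ginv w) = inv\<^bsub>presG\<^esub> (cls w)"
proof -
  interpret G: group presG by (rule group_presG)
  have "cls (ginv w) \<otimes>\<^bsub>presG\<^esub> cls w = \<one>\<^bsub>presG\<^esub>"
    using ginv_cancel[of w] by (simp add: presG_mult presG_one cls_eq)
  then show ?thesis by (metis G.inv_equality cls_carrier)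
qed

lemma cls_pow: "cls (gpow w n) = cls w [^]\<^bsub>presG\<^esub> n"
proof -
  interpret G: group presG by (rule group_presG)
  show ?thesis
  proof (induction n)
    case 0 then show ?case by (simp add: gpow_def presG_one)
  next
    case (Suc n)
    have "cls (gpow w (Suc n)) = cls w \<otimes>\<^bsub>presG\<^esub> cls (gpow w n)"
      by (simp add: gpow_def cls_app[symmetric])
    then show ?case using Suc G.nat_pow_Suc2[of "cls w" n] by simp
  qed
qed

lemma cls_rel: "r \<in> relators \<Longrightarrow> cls r = \<one>\<^bsub>presG\<^esub>"
  using geqv_rel[of r "[]" "[]"] by (simp add: presG_one cls_eq)

theorem lemma5p2:
  shows "group presG \<and> derived presG (carrier presG) = carrier presG"
proof -
  interpret G: group presG by (rule group_presG)
  define D where "D = derived presG (carrier presG)"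
  have Dn: "D \<lhd> presG" unfolding D_def by (rule G.derived_self_is_normal)
  have Dsub: "subgroup D presG" using Dn by (simp add: normal_def)
  define Q where "Q = presG Mod D"
  interpret Q: comm_group Q unfolding Q_def D_def by (rule G.derived_quot_is_comm_group)
  define h where "h = (\<lambda>a. D #>\<^bsub>presG\<^esub> a)"
  interpret hh: group_hom presG Q h
    unfolding group_hom_def group_hom_axioms_def h_def Q_def
    using G.group_axioms Q.group_axioms normal.r_coset_hom_Mod[OF Dn] by (simp add: Q_def)
  let ?X = "h (cls wx)" and ?Y = "h (cls wy)" and ?T = "h (cls wt)"
  have hrel: "r \<in> relators \<Longrightarrow> h (cls r) = \<one>\<^bsub>Q\<^esub>" for r
    by (simp add: cls_rel)
  have r1: "?X [^]\<^bsub>Q\<^esub> (7::nat) = \<one>\<^bsub>Q\<^esub>"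
    using hrel[of "gpow wx 7"] by (simp add: relators_def cls_pow hh.hom_nat_pow)
  have r2: "?Y [^]\<^bsub>Q\<^esub> (2::nat) = \<one>\<^bsub>Q\<^esub>"
    using hrel[of "gpow wy 2"] by (simp add: relators_def cls_pow hh.hom_nat_pow)
  have r3: "(?X \<otimes>\<^bsub>Q\<^esub> ?Y) [^]\<^bsub>Q\<^esub> (3::nat) = \<one>\<^bsub>Q\<^esub>"
    using hrel[of "gpow (wx @ wy) 3"] by (simp add: relators_def cls_pow cls_app hh.hom_nat_pow)
  have r5: "?T [^]\<^bsub>Q\<^esub> (2::nat) = \<one>\<^bsub>Q\<^esub>"
    using hrel[of "gpow wt 2"] by (simp add: relators_def cls_pow hh.hom_nat_pow)
  have r8: "(?Y \<otimes>\<^bsub>Q\<^esub> (inv\<^bsub>Q\<^esub> (?X [^]\<^bsub>Q\<^esub> (2::nat)) \<otimes>\<^bsub>Q\<^esub> (?T \<otimes>\<^bsub>Q\<^esub> ?X [^]\<^bsub>Q\<^esub> (2::nat)))) [^]\<^bsub>Q\<^esub> (5::nat) = \<one>\<^bsub>Q\<^esub>"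
    using hrel[of "gpow (wy @ gconj wt (gpow wx 2)) 5"]
    by (simp add: relators_def cls_pow cls_app cls_ginv gconj_def hh.hom_nat_pow)
  have k: "?X = \<one>\<^bsub>Q\<^esub> \<and> ?Y = \<one>\<^bsub>Q\<^esub> \<and> ?T = \<one>\<^bsub>Q\<^esub>"
    by (rule Q.abel_kill[OF _ _ _ r1 r2 r3 r5 r8]) simp_all
  have inD: "h (cls w) = \<one>\<^bsub>Q\<^esub> \<Longrightarrow> cls w \<in> D" for w
    using G.coset_join1[of D "cls w"] Dsub by (simp add: h_def Q_def)
  have gx: "cls wx \<in> D" and gy: "cls wy \<in> D" and gt: "cls wt \<in> D"
    using k inD by auto
  have letter: "cls [(g, b)] \<in> D" for g b
  proof -
    have base: "cls [(g, False)] \<in> D"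
      using gx gy gt by (cases g) (simp_all add: wx_def wy_def wt_def)
    show ?thesis
    proof (cases b)
      case True
      have "cls [(g, True)] = cls (ginv [(g, False)])" by (simp add: ginv_def)
      also have "\<dots> = inv\<^bsub>presG\<^esub> cls [(g, False)]" by (rule cls_ginv)
      finally show ?thesis using True base subgroup.m_inv_closed[OF Dsub] by simp
    qed (use base in simp)
  qed
  have all: "cls w \<in> D" for w
  proof (induction w)
    case Nil then show ?case using subgroup.one_closed[OF Dsub] by (simp add: presG_one)
  next
    case (Cons a w)
    obtain g b where a: "a = (g, b)" by (cases a)
    have "cls (a # w) = cls [(g, b)] \<otimes>\<^bsub>presG\<^esub> cls w"
      using cls_app[of "[(g,b)]" w] by (simp add: a)
    then show ?case using letter Cons subgroup.m_closed[OF Dsub] by simp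
  qed
  have "D = carrier presG"
    using all subgroup.subset[OF Dsub] by (auto simp: presG_carrier)
  then show ?thesis using G.group_axioms D_def by simp
qed

end
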